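(* Let $P=R\cup B$ where $R$ is a set of $n$ red points and $B$ a set of $n$ blue points, all distinct and on the line $y=0$, and let $p_1<p_2<\dots<p_{2n}$ be the points of $P$ sorted by $x$-coordinate. Let $2m$ be the smallest positive integer such that $\{p_1,\dots,p_{2m}\}$ contains equally many red and blue points (so $P_1=\{p_1,\dots,p_{2m}\}$ is the first color-balanced prefix). Then $p_1$ and $p_{2m}$ have different colors, and every minimum-weight non-crossing bichromatic perfect matching of $P$ contains the edge $\{p_1,p_{2m}\}$. *)

theory Defs
  imports Complex_Main
begin

text \<open>Points lie on the line y = 0 and are identified with their x-coordinates.
  An edge is a two-element set {r, b} with r red and b blue.\<close>

definition bichromatic_perfect_matching :: "real set \<Rightarrow> real set \<Rightarrow> real set set \<Rightarrow> bool" where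
  "bichromatic_perfect_matching R B M \<longleftrightarrow>
     (\<forall>e\<in>M. \<exists>r\<in>R. \<exists>b\<in>B. e = {r, b}) \<and>
     (\<forall>x\<in>R \<union> B. \<exists>!e. e \<in> M \<and> x \<in> e)"

definition noncrossing :: "real set set \<Rightarrow> bool" where
  "noncrossing M \<longleftrightarrow>
     (\<forall>e\<in>M. \<forall>f\<in>M. \<not> (Min e < Min f \<and> Min f < Max e \<and> Max e < Max f))"

definition matching_weight :: "real set set \<Rightarrow> real" where
  "matching_weight M = (\<Sum>e\<in>M. Max e - Min e)"

definition min_weight_nc_bichromatic_matching :: "real set \<Rightarrow> real set \<Rightarrow> real set set \<Rightarrow> bool" where
  "min_weight_nc_bichromatic_matching R B M \<longleftrightarrow>
     bichromatic_perfect_matching R B M \<and> noncrossing M \<and>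
     (\<forall>M'. bichromatic_perfect_matching R B M' \<and> noncrossing M' \<longrightarrow>
            matching_weight M \<le> matching_weight M')"

end

theory Submission
  imports Defs
begin

lemma bpm_sym_imp:
  assumes h: "bichromatic_perfect_matching R B M"
  shows "bichromatic_perfect_matching B R M"
proof -
  have h1: "\<forall>e\<in>M. \<exists>r\<in>R. \<exists>b\<in>B. e = {r, b}" and h2: "\<forall>x\<in>R \<union> B. \<exists>!e. e \<in> M \<and> x \<in> e"
    using h unfolding bichromatic_perfect_matching_def by auto
  have g1: "\<forall>e\<in>M. \<exists>r\<in>B. \<exists>b\<in>R. e = {r, b}"
  proof
    fix e assume e: "e \<in> M"
    then obtain r b where rb: "r \<in> R" "b \<in> B" "e = {r,b}" using h1 by blast
    have "e = {b,r}" using rb(3) by (simp add: insert_commute)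
    thus "\<exists>r\<in>B. \<exists>b\<in>R. e = {r, b}" using rb by blast
  qed
  have g2: "\<forall>x\<in>B \<union> R. \<exists>!e. e \<in> M \<and> x \<in> e" using h2 by (simp add: Un_commute)
  show ?thesis unfolding bichromatic_perfect_matching_def using g1 g2 by simp
qed

lemma bpm_sym: "bichromatic_perfect_matching R B M = bichromatic_perfect_matching B R M"
  using bpm_sym_imp by blast

definition partner :: "real set set \<Rightarrow> real \<Rightarrow> real" where
  "partner M x = (THE y. {x,y} \<in> M)"

lemma bpm_unique:
  assumes "bichromatic_perfect_matching R B M" "x \<in> R \<union> B" "e \<in> M" "f \<in> M" "x \<in> e" "x \<in> f"
  shows "e = f"
  using assms unfolding bichromatic_perfect_matching_def by blast

lemma bpm_edge:
  assumes "bichromatic_perfect_matching R B M" "e \<in> M"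
  obtains r b where "r \<in> R" "b \<in> B" "e = {r,b}"
proof -
  have "\<forall>e\<in>M. \<exists>r\<in>R. \<exists>b\<in>B. e = {r,b}" using assms(1) unfolding bichromatic_perfect_matching_def by simp
  hence "\<exists>r\<in>R. \<exists>b\<in>B. e = {r,b}" using assms(2) by simp
  thus ?thesis using that by auto
qed

lemma bpm_cover:
  assumes "bichromatic_perfect_matching R B M" "x \<in> R \<union> B"
  obtains e where "e \<in> M" "x \<in> e"
proof -
  have "\<forall>x\<in>R \<union> B. \<exists>!e. e \<in> M \<and> x \<in> e" using assms(1) unfolding bichromatic_perfect_matching_def by simp
  hence "\<exists>!e. e \<in> M \<and> x \<in> e" using assms(2) by simp
  thus ?thesis using that by auto
qed

lemma partner_eq:
  assumes bpm: "bichromatic_perfect_matching R B M" and d: "R \<inter> B = {}" and xy: "{x,y} \<in> M"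
  shows "partner M x = y"
proof -
  obtain r b where rb: "r \<in> R" "b \<in> B" "{x,y} = {r,b}" using bpm_edge[OF bpm xy] by blast
  have "r \<noteq> b" using rb d by auto
  hence "x \<noteq> y" using rb(3) by (metis doubleton_eq_iff)
  have xR: "x \<in> R \<union> B" using rb by (metis UnI1 UnI2 doubleton_eq_iff)
  show ?thesis unfolding partner_def
  proof (rule the_equality)
    show "{x,y} \<in> M" by fact
    fix z assume "{x,z} \<in> M"
    hence "{x,z} = {x,y}" using bpm_unique[OF bpm xR _ xy] by auto
    thus "z = y" using \<open>x \<noteq> y\<close> by (metis doubleton_eq_iff)
  qed
qed

lemma partner_props:
  assumes bpm: "bichromatic_perfect_matching R B M" and d: "R \<inter> B = {}" and x: "x \<in> R \<union> B"
  shows "{x, partner M x} \<in> M \<and> (x \<in> R \<longrightarrow> partner M x \<in> B) \<and> (x \<in> B \<longrightarrow> partner M x \<in> R)"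
proof -
  obtain e where e: "e \<in> M" "x \<in> e" using bpm_cover[OF bpm x] by blast
  obtain r b where rb: "r \<in> R" "b \<in> B" "e = {r,b}" using bpm_edge[OF bpm e(1)] by blast
  show ?thesis
  proof (cases "x = r")
    case True
    hence "{x,b} \<in> M" using e rb by simp
    thus ?thesis using partner_eq[OF bpm d] True rb d by auto
  next
    case False
    hence "x = b" using e rb by auto
    hence "{x,r} \<in> M" using e rb by (simp add: insert_commute)
    thus ?thesis using partner_eq[OF bpm d] \<open>x = b\<close> rb d by auto
  qed
qed

lemma partner_partner:
  assumes bpm: "bichromatic_perfect_matching R B M" and d: "R \<inter> B = {}" and x: "x \<in> R \<union> B"
  shows "partner M (partner M x) = x"
  using partner_props[OF assms] partner_eq[OF bpm d, of "partner M x" x] by (simp add: insert_commute)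

lemma partner_in:
  assumes bpm: "bichromatic_perfect_matching R B M" and d: "R \<inter> B = {}" and x: "x \<in> R \<union> B"
  shows "partner M x \<in> R \<union> B" "partner M x \<noteq> x"
  using partner_props[OF assms] x d by auto

lemma count_le:
  assumes bpm: "bichromatic_perfect_matching R B M" and d: "R \<inter> B = {}" and S: "finite S"
    and cl: "\<forall>x\<in>S \<inter> B. partner M x \<in> S"
  shows "card (S \<inter> B) \<le> card (S \<inter> R)"
proof (rule card_inj_on_le)
  show "inj_on (partner M) (S \<inter> B)"
    by (rule inj_onI) (metis IntD2 UnI2 partner_partner[OF bpm d])
  show "partner M ` (S \<inter> B) \<subseteq> S \<inter> R" using cl partner_props[OF bpm d] by auto
  show "finite (S \<inter> R)" using S by simp
qed

lemma bpm_finite: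
  assumes bpm: "bichromatic_perfect_matching R B M" and "finite R" "finite B"
  shows "finite M"
proof -
  have "M \<subseteq> (\<lambda>(r,b). {r,b}) ` (R \<times> B)"
    using bpm unfolding bichromatic_perfect_matching_def by fastforce
  thus ?thesis using assms by (meson finite_SigmaI finite_imageI finite_subset)
qed

lemma edge_form:
  assumes bpm: "bichromatic_perfect_matching R B M" and d: "R \<inter> B = {}" and f: "f \<in> M"
  obtains x y where "f = {x,y}" "x < y" "x \<in> R \<union> B" "y \<in> R \<union> B"
proof -
  obtain r b where rb: "r \<in> R" "b \<in> B" "f = {r,b}" using bpm_edge[OF bpm f] by blast
  have "r \<noteq> b" using rb d by auto
  show ?thesis
  proof (cases "r < b")
    case True thus ?thesis using that rb by auto
  next
    case False
    hence "b < r" using \<open>r \<noteq> b\<close> by auto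
    thus ?thesis using that rb by (auto simp: insert_commute)
  qed
qed


lemma min2: "(x::real) < y \<Longrightarrow> Min {x,y} = x \<and> Max {x,y} = y" by auto

lemma exchange:
  assumes bpm: "bichromatic_perfect_matching R B M" and nc: "noncrossing M" and d: "R \<inter> B = {}"
    and fR: "finite R" and fB: "finite B"
    and col: "a \<in> R" "r \<in> R" "b \<in> B" "c \<in> B"
    and e1: "{a,c} \<in> M" and e2: "{b,r} \<in> M"
    and ord: "a < b" "b < r" "r < c"
    and none: "\<forall>h\<in>M. \<not> (a < Min h \<and> Min h < b \<and> r < Max h \<and> Max h < c)"
  shows "\<exists>M'. bichromatic_perfect_matching R B M' \<and> noncrossing M' \<and> matching_weight M' < matching_weight M"
proof -
  define M0 where "M0 = M - {{a,c},{b,r}}"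
  define M' where "M' = insert {a,b} (insert {r,c} M0)"
  have ncM: "\<And>e f. e \<in> M \<Longrightarrow> f \<in> M \<Longrightarrow> \<not> (Min e < Min f \<and> Min f < Max e \<and> Max e < Max f)"
    using nc unfolding noncrossing_def by blast
  have ac: "Min {a,c} = a" "Max {a,c} = c" using min2[of a c] ord by auto
  have br: "Min {b,r} = b" "Max {b,r} = r" using min2[of b r] ord by auto
  have ab: "Min {a,b} = a" "Max {a,b} = b" using min2[of a b] ord by auto
  have rc: "Min {r,c} = r" "Max {r,c} = c" using min2[of r c] ord by auto
  have U: "a \<in> R \<union> B" "b \<in> R \<union> B" "c \<in> R \<union> B" "r \<in> R \<union> B" using col by auto
  have old: "\<not> (a < Min f \<and> Min f < b \<and> b < Max f) \<and> \<not> (Min f < a \<and> a < Max f \<and> Max f < b)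
      \<and> \<not> (r < Min f \<and> Min f < c \<and> c < Max f) \<and> \<not> (Min f < r \<and> r < Max f \<and> Max f < c)"
    if f: "f \<in> M0" for f
  proof -
    have fM: "f \<in> M" and f1: "f \<noteq> {a,c}" and f2: "f \<noteq> {b,r}" using f unfolding M0_def by auto
    obtain x y where xy: "f = {x,y}" "x < y" using edge_form[OF bpm d fM] by blast
    have mm: "Min f = x" "Max f = y" using xy min2 by auto
    have nin: "r \<notin> f" "b \<notin> f" "a \<notin> f" "c \<notin> f"
    proof -
      show "r \<notin> f" proof assume "r \<in> f" hence "f = {b,r}" using bpm_unique[OF bpm U(4) fM e2] by simp
        thus False using f2 by simp qed
      show "b \<notin> f" proof assume "b \<in> f" hence "f = {b,r}" using bpm_unique[OF bpm U(2) fM e2] by simp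
        thus False using f2 by simp qed
      show "a \<notin> f" proof assume "a \<in> f" hence "f = {a,c}" using bpm_unique[OF bpm U(1) fM e1] by simp
        thus False using f1 by simp qed
      show "c \<notin> f" proof assume "c \<in> f" hence "f = {a,c}" using bpm_unique[OF bpm U(3) fM e1] by simp
        thus False using f1 by simp qed
    qed
    have nr: "x \<noteq> r" "y \<noteq> r" "x \<noteq> b" "y \<noteq> b" "x \<noteq> a" "y \<noteq> a" "x \<noteq> c" "y \<noteq> c"
      using nin xy(1) by auto
    have n1: "\<not> (x < b \<and> b < y \<and> y < r)" "\<not> (b < x \<and> x < r \<and> r < y)"
      using ncM[OF fM e2] ncM[OF e2 fM] mm br by auto
    have n2: "\<not> (x < a \<and> a < y \<and> y < c)" "\<not> (a < x \<and> x < c \<and> c < y)"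
      using ncM[OF fM e1] ncM[OF e1 fM] mm ac by auto
    have n3: "\<not> (a < x \<and> x < b \<and> r < y \<and> y < c)" using none fM mm by auto
    show ?thesis unfolding mm using n1 n2 n3 nr ord xy(2) by smt
  qed
  have inM': "f \<in> M' \<longleftrightarrow> f = {a,b} \<or> f = {r,c} \<or> (f \<in> M \<and> f \<noteq> {a,c} \<and> f \<noteq> {b,r})" for f
    unfolding M'_def M0_def by blast
  have bpm': "bichromatic_perfect_matching R B M'"
    unfolding bichromatic_perfect_matching_def
  proof (intro conjI ballI)
    fix e assume "e \<in> M'"
    hence "e = {a,b} \<or> e = {r,c} \<or> e \<in> M" using inM' by blast
    moreover
    { assume "e \<in> M"
      then obtain r' b' where "r' \<in> R" "b' \<in> B" "e = {r',b'}" using bpm_edge[OF bpm] by blast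
      hence "\<exists>r\<in>R. \<exists>b\<in>B. e = {r, b}" by blast }
    ultimately show "\<exists>r\<in>R. \<exists>b\<in>B. e = {r, b}" using col by blast
  next
    fix x assume x: "x \<in> R \<union> B"
    obtain e where e: "e \<in> M" "x \<in> e" using bpm_cover[OF bpm x] by blast
    have uq: "\<And>f. f \<in> M \<Longrightarrow> x \<in> f \<Longrightarrow> f = e" using bpm_unique[OF bpm x _ e(1) _ e(2)] by blast
    have key: "f = {a,b} \<or> f = {r,c} \<or> (f = e \<and> e \<noteq> {a,c} \<and> e \<noteq> {b,r})" if f: "f \<in> M'" "x \<in> f" for f
    proof -
      have "f = {a,b} \<or> f = {r,c} \<or> (f \<in> M \<and> f \<noteq> {a,c} \<and> f \<noteq> {b,r})" using inM'[THEN iffD1, OF f(1)] .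
      thus ?thesis
      proof (elim disjE)
        assume h: "f \<in> M \<and> f \<noteq> {a,c} \<and> f \<noteq> {b,r}"
        hence "f = e" using uq f(2) by simp
        thus ?thesis using h by simp
      qed simp_all
    qed
    have abM: "{a,b} \<in> M'" and rcM: "{r,c} \<in> M'" unfolding M'_def by blast+
    show "\<exists>!e. e \<in> M' \<and> x \<in> e"
    proof (cases "x = a \<or> x = b")
      case True
      have "e = {a,c} \<or> e = {b,r}" using True uq e1 e2 by blast
      show ?thesis
      proof (rule ex1I[of _ "{a,b}"])
        show "{a,b} \<in> M' \<and> x \<in> {a,b}" using abM True by blast
        fix f assume f: "f \<in> M' \<and> x \<in> f"
        have "x \<notin> {r,c}" using True ord by auto
        thus "f = {a,b}" using key[of f] f \<open>e = {a,c} \<or> e = {b,r}\<close> by blast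
      qed
    next
      case nab: False
      show ?thesis
      proof (cases "x = r \<or> x = c")
        case True
        have "e = {a,c} \<or> e = {b,r}" using True uq e1 e2 by blast
        show ?thesis
        proof (rule ex1I[of _ "{r,c}"])
          show "{r,c} \<in> M' \<and> x \<in> {r,c}" using rcM True by blast
          fix f assume f: "f \<in> M' \<and> x \<in> f"
          have "x \<notin> {a,b}" using True ord by auto
          thus "f = {r,c}" using key[of f] f \<open>e = {a,c} \<or> e = {b,r}\<close> by blast
        qed
      next
        case False
        hence ne1: "e \<noteq> {a,c}" "e \<noteq> {b,r}" using e nab by auto
        show ?thesis
        proof (rule ex1I[of _ e])
          show "e \<in> M' \<and> x \<in> e" using inM' e ne1 by blast
          fix f assume f: "f \<in> M' \<and> x \<in> f"
          have "x \<notin> {a,b}" "x \<notin> {r,c}" using False nab by auto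
          thus "f = e" using key[of f] f by blast
        qed
      qed
    qed
  qed
  have nc': "noncrossing M'"
    unfolding noncrossing_def
  proof (intro ballI)
    fix e f assume e: "e \<in> M'" and f: "f \<in> M'"
    have nn: "\<And>e f. e \<in> M0 \<Longrightarrow> f \<in> M0 \<Longrightarrow> \<not> (Min e < Min f \<and> Min f < Max e \<and> Max e < Max f)"
      using ncM unfolding M0_def by blast
    have E: "e = {a,b} \<or> e = {r,c} \<or> e \<in> M0" using e unfolding M'_def by blast
    have F: "f = {a,b} \<or> f = {r,c} \<or> f \<in> M0" using f unfolding M'_def by blast
    show "\<not> (Min e < Min f \<and> Min f < Max e \<and> Max e < Max f)"
    proof (cases "e \<in> M0")
      case eM: True
      show ?thesis
      proof (cases "f \<in> M0")
        case True thus ?thesis using nn eM by blast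
      next
        case False
        hence "f = {a,b} \<or> f = {r,c}" using F by blast
        thus ?thesis using old[OF eM] ab rc by auto
      qed
    next
      case eN: False
      hence eN2: "e = {a,b} \<or> e = {r,c}" using E by blast
      show ?thesis
      proof (cases "f \<in> M0")
        case True thus ?thesis using old[OF True] eN2 ab rc by auto
      next
        case False
        hence "f = {a,b} \<or> f = {r,c}" using F by blast
        thus ?thesis using eN2 ab rc ord by auto
      qed
    qed
  qed
  have fM: "finite M" using bpm_finite[OF bpm fR fB] .
  have fM0: "finite M0" using fM unfolding M0_def by simp
  have ne1: "{a,b} \<noteq> {r,c}" using ord by (auto simp: doubleton_eq_iff)
  have ne2: "{a,c} \<noteq> {b,r}" using ord by (auto simp: doubleton_eq_iff)
  note ne = ne1 ne2
  have nin1: "{a,b} \<notin> M0"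
  proof
    assume h: "{a,b} \<in> M0"
    have "{a,b} \<in> M" using h unfolding M0_def by blast
    hence "{a,b} = {a,c}" using bpm_unique[OF bpm U(1) _ e1] by blast
    thus False using ord by (auto simp: doubleton_eq_iff)
  qed
  have nin2: "{r,c} \<notin> M0"
  proof
    assume h: "{r,c} \<in> M0"
    have "{r,c} \<in> M" using h unfolding M0_def by blast
    hence "{r,c} = {b,r}" using bpm_unique[OF bpm U(4) _ e2] by blast
    thus False using ord by (auto simp: doubleton_eq_iff)
  qed
  have nin3: "{a,b} \<notin> insert {r,c} M0" using ne nin1 by blast
  have w': "matching_weight M' = (b - a) + ((c - r) + matching_weight M0)"
    unfolding M'_def matching_weight_def
    using sum.insert[OF finite_insert[THEN iffD2, OF fM0] nin3, of "\<lambda>e. Max e - Min e"]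
          sum.insert[OF fM0 nin2, of "\<lambda>e. Max e - Min e"] ab rc by simp
  have sub: "{{a,c},{b,r}} \<subseteq> M" using e1 e2 by blast
  have s2: "(\<Sum>e\<in>{{a,c},{b,r}}. Max e - Min e) = (c - a) + (r - b)"
    using ne(2) ac br by simp
  have w: "matching_weight M = matching_weight M0 + ((c - a) + (r - b))"
    unfolding matching_weight_def M0_def
    using sum.subset_diff[OF sub fM, of "\<lambda>e. Max e - Min e"] s2 by simp
  have "matching_weight M' < matching_weight M" using w w' ord by simp
  thus ?thesis using bpm' nc' by blast
qed


lemma core:
  assumes bpm: "bichromatic_perfect_matching R B M" and nc: "noncrossing M"
    and minw: "\<forall>M'. bichromatic_perfect_matching R B M' \<and> noncrossing M' \<longrightarrow> matching_weight M \<le> matching_weight M'"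
    and d: "R \<inter> B = {}" and fR: "finite R" and fB: "finite B"
    and a0: "a0 \<in> R" "\<forall>x\<in>R \<union> B. a0 \<le> x" "a0 \<le> g"
    and cnt: "card ({x\<in>R \<union> B. x \<le> g} \<inter> R) = card ({x\<in>R \<union> B. x \<le> g} \<inter> B)"
    and e0: "{a0,q} \<in> M" and gq: "g < q"
  shows False
proof -
  define S where "S = {x\<in>R \<union> B. x \<le> g}"
  have fS: "finite S" unfolding S_def using fR fB by simp
  have ncM: "\<And>e f. e \<in> M \<Longrightarrow> f \<in> M \<Longrightarrow> \<not> (Min e < Min f \<and> Min f < Max e \<and> Max e < Max f)"
    using nc unfolding noncrossing_def by blast
  have noex: "\<exists>h\<in>M. a < Min h \<and> Min h < b \<and> r < Max h \<and> Max h < c"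
    if hh: "a \<in> R" "r \<in> R" "b \<in> B" "c \<in> B" "{a,c} \<in> M" "{b,r} \<in> M" "a < b" "b < r" "r < c" for a b c r
  proof (rule ccontr)
    assume "\<not> ?thesis"
    then obtain M' where "bichromatic_perfect_matching R B M'" "noncrossing M'" "matching_weight M' < matching_weight M"
      using exchange[OF bpm nc d fR fB hh] by blast
    thus False using minw by force
  qed
  have pq: "partner M a0 = q" using partner_eq[OF bpm d e0] .
  define S0 where "S0 = S - {a0}"
  have a0S: "a0 \<in> S \<inter> R" using a0 unfolding S_def by auto
  have fSR: "finite (S \<inter> R)" using fS by simp
  have e1: "S0 \<inter> R = (S \<inter> R) - {a0}" unfolding S0_def by blast
  have c1: "card (S0 \<inter> R) = card (S \<inter> R) - 1" unfolding e1 using card_Diff_singleton[OF a0S] .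
  have e2: "S0 \<inter> B = S \<inter> B" using a0(1) d unfolding S0_def by blast
  have c2: "card (S0 \<inter> B) = card (S \<inter> B)" unfolding e2 ..
  have "card (S \<inter> R) > 0" using fSR a0S card_gt_0_iff by blast
  hence "card (S0 \<inter> B) > card (S0 \<inter> R)" using c1 c2 cnt unfolding S_def by simp
  hence "\<not> (\<forall>x\<in>S0 \<inter> B. partner M x \<in> S0)" using count_le[OF bpm d, of S0] fS unfolding S0_def by auto
  then obtain x where x: "x \<in> S0 \<inter> B" "partner M x \<notin> S0" by blast
  have xU: "x \<in> R \<union> B" using x by auto
  have "partner M x \<noteq> a0"
  proof
    assume "partner M x = a0"
    hence "q = x" using pq partner_partner[OF bpm d xU] by simp
    thus False using x gq unfolding S0_def S_def by auto
  qed
  hence xg: "g < partner M x" using x partner_in[OF bpm d xU] unfolding S0_def S_def by auto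
  define BL where "BL = {x\<in>B. x \<le> g \<and> g < partner M x}"
  have BLne: "x \<in> BL" using x xg unfolding BL_def S0_def S_def by auto
  have fBL: "finite BL" using fB unfolding BL_def by simp
  define b where "b = Min BL"
  have bBL: "b \<in> BL" unfolding b_def using BLne fBL Min_in by blast
  have bmin: "\<And>y. y \<in> BL \<Longrightarrow> b \<le> y" unfolding b_def using fBL by simp
  define RL where "RL = {x\<in>R. x < b \<and> g < partner M x}"
  have "a0 \<noteq> b" using a0 bBL d unfolding BL_def by auto
  hence a0RL: "a0 \<in> RL" using a0 bBL pq gq unfolding RL_def BL_def by force
  have fRL: "finite RL" using fR unfolding RL_def by simp
  define a where "a = Max RL"
  have aRL: "a \<in> RL" unfolding a_def using a0RL fRL Max_in by blast
  have amax: "\<And>y. y \<in> RL \<Longrightarrow> y \<le> a" unfolding a_def using fRL by simp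
  define c where "c = partner M a"
  define r where "r = partner M b"
  have aU: "a \<in> R \<union> B" and bU: "b \<in> R \<union> B" using aRL bBL unfolding RL_def BL_def by auto
  have cB: "c \<in> B" and e1c: "{a,c} \<in> M" using partner_props[OF bpm d aU] aRL unfolding c_def RL_def by auto
  have rR: "r \<in> R" and e2c: "{b,r} \<in> M" using partner_props[OF bpm d bU] bBL unfolding r_def BL_def by auto
  have ab: "a < b" using aRL unfolding RL_def by simp
  have bg: "b \<le> g" "g < r" using bBL unfolding BL_def r_def by auto
  have cg: "g < c" using aRL unfolding RL_def c_def by simp
  have "c \<noteq> r" using cB rR d by auto
  moreover have "\<not> (a < b \<and> b < c \<and> c < r)" using ncM[OF e1c e2c] min2[of a c] min2[of b r] ab bg cg by auto
  ultimately have rc: "r < c" using ab bg cg by linarith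
  obtain h where h: "h \<in> M" "a < Min h" "Min h < b" "r < Max h" "Max h < c"
    using noex[OF _ rR _ cB e1c e2c ab _ rc] aRL bBL bg unfolding RL_def BL_def by force
  obtain u v where uv: "h = {u,v}" "u < v" "u \<in> R \<union> B" using edge_form[OF bpm d h(1)] by blast
  have mm: "Min h = u" "Max h = v" using uv min2 by auto
  have pu: "partner M u = v" using partner_eq[OF bpm d] h(1) uv by simp
  show False
  proof (cases "u \<in> B")
    case True
    hence "u \<in> BL" using h mm pu bg unfolding BL_def by auto
    thus False using bmin h mm by fastforce
  next
    case False
    hence "u \<in> RL" using uv h mm pu bg unfolding RL_def by auto
    thus False using amax h mm by fastforce
  qed
qed


lemma ivt_int:
  fixes f :: "nat \<Rightarrow> int"
  assumes "\<forall>i<b. \<bar>f (Suc i) - f i\<bar> \<le> 1" "a \<le> b" "f a > 0" "f b < 0"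
  shows "\<exists>i. a < i \<and> i < b \<and> f i = 0"
  using assms
proof (induction b)
  case 0 thus ?case by simp
next
  case (Suc b)
  show ?case
  proof (cases "a = Suc b")
    case True thus ?thesis using Suc by simp
  next
    case False
    hence ab: "a \<le> b" using Suc by simp
    have st: "\<bar>f (Suc b) - f b\<bar> \<le> 1" using Suc by simp
    consider "f b < 0" | "f b = 0" | "f b > 0" by linarith
    thus ?thesis
    proof cases
      case 1
      then obtain i where "a < i" "i < b" "f i = 0" using Suc.IH[OF _ ab Suc.prems(3) 1] Suc.prems(1) by auto
      thus ?thesis by (intro exI[of _ i]) simp
    next
      case 2
      hence "a \<noteq> b" using Suc by auto
      thus ?thesis using 2 ab by (intro exI[of _ b]) simp
    next
      case 3 thus ?thesis using st Suc.prems(4) by linarith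
    qed
  qed
qed

lemma filter_Suc:
  "{i\<in>{1..Suc k}. P i} = (if P (Suc k) then insert (Suc k) {i\<in>{1..k}. P i} else {i\<in>{1..k}. P i})"
  by (auto simp: le_Suc_eq)

lemma card_filter_Suc:
  "card {i\<in>{1..Suc k}. P i} = card {i\<in>{1..k}. P i} + (if P (Suc k) then 1 else 0)"
proof -
  have "Suc k \<notin> {i\<in>{1..k}. P i}" by simp
  moreover have "finite {i\<in>{1..k}. P i}" by simp
  ultimately show ?thesis unfolding filter_Suc by simp
qed

theorem mainTheorem5:
  fixes R B :: "real set" and n m :: nat and p :: "nat \<Rightarrow> real"
  assumes "finite R" "finite B" "card R = n" "card B = n" "R \<inter> B = {}"
    and "strict_mono_on {1..2*n} p" "p ` {1..2*n} = R \<union> B"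
    and "1 \<le> m" "m \<le> n"
    and "card {i\<in>{1..2*m}. p i \<in> R} = card {i\<in>{1..2*m}. p i \<in> B}"
    and "\<forall>k. 1 \<le> k \<and> k < m \<longrightarrow>
           card {i\<in>{1..2*k}. p i \<in> R} \<noteq> card {i\<in>{1..2*k}. p i \<in> B}"
  shows "((p 1 \<in> R \<and> p (2*m) \<in> B) \<or> (p 1 \<in> B \<and> p (2*m) \<in> R)) \<and>
         (\<forall>M. min_weight_nc_bichromatic_matching R B M \<longrightarrow> {p 1, p (2*m)} \<in> M)"
proof -
  note fR = assms(1) and fB = assms(2) and d = assms(5) and sm = assms(6) and img = assms(7)
  note m1 = assms(8) and mn = assms(9) and bal = assms(10) and nbal = assms(11)
  define cR where "cR k = card {i\<in>{1..k}. p i \<in> R}" for k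
  define cB where "cB k = card {i\<in>{1..k}. p i \<in> B}" for k
  have inj: "inj_on p {1..2*n}" using strict_mono_on_imp_inj_on[OF sm] .
  have pin: "p i \<in> R \<union> B" if "i \<in> {1..2*n}" for i using img that by blast
  have pex: "\<exists>i\<in>{1..2*n}. x = p i" if "x \<in> R \<union> B" for x using img that by blast
  have le_iff: "p i \<le> p j \<longleftrightarrow> i \<le> j" if "i \<in> {1..2*n}" "j \<in> {1..2*n}" for i j
    using strict_mono_on_less_eq[OF sm that] .
  have lt_iff: "p i < p j \<longleftrightarrow> i < j" if "i \<in> {1..2*n}" "j \<in> {1..2*n}" for i j
    using strict_mono_on_less[OF sm that] .
  have one: "1 \<in> {1..2*n}" and tm: "2*m \<in> {1..2*n}" using m1 mn by auto
  have stepR: "cR (Suc k) = cR k + (if p (Suc k) \<in> R then 1 else 0)" for k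
    unfolding cR_def by (rule card_filter_Suc)
  have stepB: "cB (Suc k) = cB k + (if p (Suc k) \<in> B then 1 else 0)" for k
    unfolding cB_def by (rule card_filter_Suc)
  have c0: "cR 0 = 0" "cB 0 = 0" unfolding cR_def cB_def by auto
  have sumk: "cR k + cB k = k" if "k \<le> 2*n" for k
    using that
  proof (induction k)
    case 0 thus ?case using c0 by simp
  next
    case (Suc k)
    have "p (Suc k) \<in> R \<union> B" using pin Suc.prems by simp
    hence "(if p (Suc k) \<in> R then 1 else 0) + (if p (Suc k) \<in> B then 1 else (0::nat)) = 1" using d by auto
    thus ?case using Suc stepR[of k] stepB[of k] by simp
  qed
  have hyp: "cR (2*k) \<noteq> cB (2*k)" if "1 \<le> k" "k < m" for k
    using nbal that unfolding cR_def cB_def by blast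
  have balm: "cR (2*m) = cB (2*m)" using bal unfolding cR_def cB_def .
  define dd where "dd k = int (cR k) - int (cB k)" for k
  have dstep: "dd (Suc k) = dd k + (if p (Suc k) \<in> R then 1 else -1)" if "Suc k \<le> 2*n" for k
  proof -
    have "p (Suc k) \<in> R \<union> B" using pin that by simp
    thus ?thesis unfolding dd_def using stepR[of k] stepB[of k] d by auto
  qed
  have dzero: False if "dd i = 0" "1 < i" "i < 2*m - 1" for i
  proof -
    have "cR i = cB i" using that(1) unfolding dd_def by simp
    moreover have "cR i + cB i = i" using sumk that mn by simp
    ultimately have ik: "i = 2 * cR i" by simp
    have "cR (2 * cR i) = cB (2 * cR i)" using \<open>cR i = cB i\<close> ik by simp
    moreover have "1 \<le> cR i" "cR i < m" using ik that(2,3) by linarith+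
    ultimately show False using hyp by blast
  qed
  have dabs: "\<forall>i<2*m-1. \<bar>dd (Suc i) - dd i\<bar> \<le> 1"
  proof (intro allI impI)
    fix i assume "i < 2*m-1"
    hence "Suc i \<le> 2*n" using mn by simp
    thus "\<bar>dd (Suc i) - dd i\<bar> \<le> 1" using dstep[of i] by simp
  qed
  have d1: "dd 1 = (if p 1 \<in> R then 1 else -1)" using dstep[of 0] c0 mn m1 unfolding dd_def by simp
  have d2m: "dd (2*m - 1) = - (if p (2*m) \<in> R then 1 else -1)"
  proof -
    have "Suc (2*m-1) = 2*m" using m1 by simp
    hence "dd (2*m) = dd (2*m-1) + (if p (2*m) \<in> R then 1 else -1)" using dstep[of "2*m-1"] mn by simp
    moreover have "dd (2*m) = 0" using balm unfolding dd_def by simp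
    ultimately show ?thesis by simp
  qed
  have p1U: "p 1 \<in> R \<union> B" and p2U: "p (2*m) \<in> R \<union> B" using pin one tm by auto
  have part1: "(p 1 \<in> R \<and> p (2*m) \<in> B) \<or> (p 1 \<in> B \<and> p (2*m) \<in> R)"
  proof (rule ccontr)
    assume nc: "\<not> ?thesis"
    have le: "1 \<le> 2*m - 1" using m1 by simp
    show False
    proof (cases "p 1 \<in> R")
      case True
      hence "p (2*m) \<in> R" using nc p2U by blast
      hence "dd 1 > 0" "dd (2*m-1) < 0" using d1 d2m True by auto
      then obtain i where "1 < i" "i < 2*m-1" "dd i = 0" using ivt_int[OF dabs le] by blast
      thus False using dzero by blast
    next
      case False
      hence pB: "p 1 \<in> B" using p1U by blast
      hence "p (2*m) \<notin> R" using nc by blast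
      hence "(\<lambda>k. - dd k) 1 > 0" "(\<lambda>k. - dd k) (2*m-1) < 0" using d1 d2m False by auto
      moreover have "\<forall>i<2*m-1. \<bar>(\<lambda>k. - dd k) (Suc i) - (\<lambda>k. - dd k) i\<bar> \<le> 1" using dabs by (simp add: abs_minus_commute)
      ultimately obtain i where "1 < i" "i < 2*m-1" "dd i = 0" using ivt_int[OF _ le, of "\<lambda>k. - dd k"] by auto
      thus False using dzero by blast
    qed
  qed
  have pmin: "\<forall>x\<in>R \<union> B. p 1 \<le> x"
  proof
    fix x assume "x \<in> R \<union> B"
    then obtain i where i: "i \<in> {1..2*n}" "x = p i" using pex by blast
    thus "p 1 \<le> x" using le_iff[OF one i(1)] by auto
  qed
  have setR: "card ({x\<in>R \<union> B. x \<le> p k} \<inter> R) = cR k" if k: "k \<in> {1..2*n}" for k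
  proof -
    have "{x\<in>R \<union> B. x \<le> p k} \<inter> R = p ` {i\<in>{1..k}. p i \<in> R}"
    proof
      show "{x\<in>R \<union> B. x \<le> p k} \<inter> R \<subseteq> p ` {i\<in>{1..k}. p i \<in> R}"
      proof
        fix x assume x: "x \<in> {x\<in>R \<union> B. x \<le> p k} \<inter> R"
        then obtain i where i: "i \<in> {1..2*n}" "x = p i" using pex by blast
        hence "i \<le> k" using le_iff[OF i(1) k] x by auto
        thus "x \<in> p ` {i\<in>{1..k}. p i \<in> R}" using i x by auto
      qed
      show "p ` {i\<in>{1..k}. p i \<in> R} \<subseteq> {x\<in>R \<union> B. x \<le> p k} \<inter> R"
      proof
        fix x assume "x \<in> p ` {i\<in>{1..k}. p i \<in> R}"
        then obtain i where i: "i \<in> {1..k}" "p i \<in> R" "x = p i" by blast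
        have "i \<in> {1..2*n}" using i k by auto
        thus "x \<in> {x\<in>R \<union> B. x \<le> p k} \<inter> R" using le_iff[OF _ k, of i] i by auto
      qed
    qed
    moreover have "{i\<in>{1..k}. p i \<in> R} \<subseteq> {1..2*n}" using k by auto
    hence "inj_on p {i\<in>{1..k}. p i \<in> R}" using inj_on_subset[OF inj] by blast
    ultimately show ?thesis unfolding cR_def by (simp add: card_image)
  qed
  have setB: "card ({x\<in>R \<union> B. x \<le> p k} \<inter> B) = cB k" if k: "k \<in> {1..2*n}" for k
  proof -
    have "{x\<in>R \<union> B. x \<le> p k} \<inter> B = p ` {i\<in>{1..k}. p i \<in> B}"
    proof
      show "{x\<in>R \<union> B. x \<le> p k} \<inter> B \<subseteq> p ` {i\<in>{1..k}. p i \<in> B}"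
      proof
        fix x assume x: "x \<in> {x\<in>R \<union> B. x \<le> p k} \<inter> B"
        then obtain i where i: "i \<in> {1..2*n}" "x = p i" using pex by blast
        hence "i \<le> k" using le_iff[OF i(1) k] x by auto
        thus "x \<in> p ` {i\<in>{1..k}. p i \<in> B}" using i x by auto
      qed
      show "p ` {i\<in>{1..k}. p i \<in> B} \<subseteq> {x\<in>R \<union> B. x \<le> p k} \<inter> B"
      proof
        fix x assume "x \<in> p ` {i\<in>{1..k}. p i \<in> B}"
        then obtain i where i: "i \<in> {1..k}" "p i \<in> B" "x = p i" by blast
        have "i \<in> {1..2*n}" using i k by auto
        thus "x \<in> {x\<in>R \<union> B. x \<le> p k} \<inter> B" using le_iff[OF _ k, of i] i by auto
      qed
    qed
    moreover have "{i\<in>{1..k}. p i \<in> B} \<subseteq> {1..2*n}" using k by auto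
    hence "inj_on p {i\<in>{1..k}. p i \<in> B}" using inj_on_subset[OF inj] by blast
    ultimately show ?thesis unfolding cB_def by (simp add: card_image)
  qed
  have part2: "{p 1, p (2*m)} \<in> M" if mw: "min_weight_nc_bichromatic_matching R B M" for M
  proof -
    have bpm: "bichromatic_perfect_matching R B M" and nc: "noncrossing M"
      and minw: "\<forall>M'. bichromatic_perfect_matching R B M' \<and> noncrossing M' \<longrightarrow> matching_weight M \<le> matching_weight M'"
      using mw unfolding min_weight_nc_bichromatic_matching_def by auto
    have bpm2: "bichromatic_perfect_matching B R M" using bpm bpm_sym by blast
    have d2: "B \<inter> R = {}" using d by blast
    define x0 where "x0 = p 1"
    define q where "q = partner M x0"
    have x0U: "x0 \<in> R \<union> B" using p1U x0_def by simp
    have e0: "{x0,q} \<in> M" using partner_props[OF bpm d x0U] q_def by simp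
    have qU: "q \<in> R \<union> B" "q \<noteq> x0" using partner_in[OF bpm d x0U] q_def by auto
    have x0q: "x0 < q" using pmin qU x0_def by force
    have pq: "partner M q = x0" using partner_partner[OF bpm d x0U] q_def by simp
    obtain j where j: "j \<in> {1..2*n}" "q = p j" using pex[OF qU(1)] by blast
    define T where "T = {x\<in>R \<union> B. x \<le> q}"
    have fT: "finite T" unfolding T_def using fR fB by simp
    have ncM: "\<And>e f. e \<in> M \<Longrightarrow> f \<in> M \<Longrightarrow> \<not> (Min e < Min f \<and> Min f < Max e \<and> Max e < Max f)"
      using nc unfolding noncrossing_def by blast
    have clo: "partner M x \<in> T" if x: "x \<in> T" for x
    proof (rule ccontr)
      assume nT: "partner M x \<notin> T"
      have xU: "x \<in> R \<union> B" and xq: "x \<le> q" using x unfolding T_def by auto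
      have yU: "partner M x \<in> R \<union> B" using partner_in[OF bpm d xU] by simp
      hence yq: "q < partner M x" using nT unfolding T_def by auto
      have "x \<noteq> x0" using yq q_def by auto
      moreover have "x \<noteq> q" using yq pq x0q by auto
      ultimately have xx: "x0 < x" "x < q" using pmin xU xq x0_def by force+
      have ex: "{x, partner M x} \<in> M" using partner_props[OF bpm d xU] by simp
      show False using ncM[OF e0 ex] min2[of x0 q] min2[of x "partner M x"] xx yq x0q by auto
    qed
    have c1: "card (T \<inter> B) \<le> card (T \<inter> R)" using count_le[OF bpm d fT] clo by blast
    have c2: "card (T \<inter> R) \<le> card (T \<inter> B)" using count_le[OF bpm2 d2 fT] clo by blast
    have cj: "cR j = cB j" using c1 c2 setR[OF j(1)] setB[OF j(1)] unfolding T_def j(2) by simp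
    have "cR j + cB j = j" using sumk j by simp
    hence jj: "j = 2 * cR j" using cj by simp
    have "j \<noteq> 1" using qU j x0_def by auto
    hence k1: "1 \<le> cR j" using jj j by (cases "cR j") auto
    have "\<not> cR j < m" using hyp[OF k1] cj jj by metis
    moreover have "\<not> cR j > m"
    proof
      assume "cR j > m"
      hence "2*m < j" using jj by simp
      hence gq: "p (2*m) < q" using lt_iff[OF tm j(1)] j by simp
      have cnt: "card ({x\<in>R \<union> B. x \<le> p (2*m)} \<inter> R) = card ({x\<in>R \<union> B. x \<le> p (2*m)} \<inter> B)"
        using setR[OF tm] setB[OF tm] balm by simp
      have a0g: "x0 \<le> p (2*m)" using pmin p2U x0_def by blast
      show False
      proof (cases "x0 \<in> R")
        case True
        show False using core[OF bpm nc minw d fR fB True pmin[folded x0_def] a0g cnt e0 gq] .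
      next
        case False
        hence x0B: "x0 \<in> B" using x0U by blast
        have minw2: "\<forall>M'. bichromatic_perfect_matching B R M' \<and> noncrossing M' \<longrightarrow> matching_weight M \<le> matching_weight M'"
          using minw bpm_sym by blast
        have pmin2: "\<forall>x\<in>B \<union> R. x0 \<le> x" using pmin x0_def by blast
        have cnt2: "card ({x\<in>B \<union> R. x \<le> p (2*m)} \<inter> B) = card ({x\<in>B \<union> R. x \<le> p (2*m)} \<inter> R)"
          using cnt by (simp add: Un_commute)
        show False using core[OF bpm2 nc minw2 d2 fB fR x0B pmin2 a0g cnt2 e0 gq] .
      qed
    qed
    ultimately have "cR j = m" by simp
    hence "j = 2*m" using jj by simp
    thus ?thesis using e0 x0_def j(2) by simp
  qed
  show ?thesis using part1 part2 by blast
qed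


end
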